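(* Fix $p \in (0,1)$ and $r \in (0,1)$. For each positive integer $k$, let $n_k > 0$ be a number satisfying \[ I_{1-p}(n_k, k+1) = r, \] where $I_z(a,b)$ denotes the regularized incomplete beta function. Then $\frac{n_k}{k}$ tends to a limit as $k \to \infty$ which does not depend on $r$, namely \[ \lim_{k \to \infty} \frac{n_k}{k} = \frac{1}{p} - 1 . \]
   Context: The regularized incomplete beta function is $I_z(a,b) = \frac{\int_0^z t^{a-1}(1-t)^{b-1}\,dt}{\int_0^1 t^{a-1}(1-t)^{b-1}\,dt}$ for $z\in[0,1]$, $a,b>0$. For positive integers $n,k$ one has $I_{1-p}(n,k+1) = \sum_{x=0}^{k} \binom{n+k}{x} p^x (1-p)^{n+k-x}$, i.e. the probability that at most $k$ of $n+k$ independent nodes, each failing with probability $p$, fail. In the paper's setting $n$ is the number of critical nodes of a virtual infrastructure, $k$ the number of backup nodes, $p$ the independent per-node failure probability, and $r$ the reliability guarantee. *)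

theory Defs
  imports "HOL-Analysis.Analysis"
begin

text \<open>Incomplete beta integral B(z;a,b) = int_0^z t^(a-1) (1-t)^(b-1) dt
  (Henstock-Kurzweil integral; the integrand is nonnegative, so this agrees
  with the Lebesgue / improper Riemann integral for a, b > 0).\<close>
definition inc_beta :: "real \<Rightarrow> real \<Rightarrow> real \<Rightarrow> real" where
  "inc_beta z a b = integral {0..z} (\<lambda>t. t powr (a - 1) * (1 - t) powr (b - 1))"

definition reg_inc_beta :: "real \<Rightarrow> real \<Rightarrow> real \<Rightarrow> real" where
  "reg_inc_beta z a b = inc_beta z a b / inc_beta 1 a b"

end

theory Submission imports Defs begin

lemma beta_moments:
  fixes a b :: real
  assumes a: "a > 0" and b: "b > 0"
  defines "f \<equiv> \<lambda>t. t powr (a - 1) * (1 - t) powr (b - 1)"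
  defines "m \<equiv> a / (a + b)"
  defines "V \<equiv> m * ((a + 1) / (a + b + 1) - m)"
  shows "(f has_integral Beta a b) {0..1}"
    and "((\<lambda>t. f t * (t - m)^2) has_integral Beta a b * V) {0..1}"
    and "V \<le> 1 / (a + b + 1)" and "Beta a b > 0"
proof -
  show F0: "(f has_integral Beta a b) {0..1}" unfolding f_def using has_integral_Beta_real[OF a b] .
  show "Beta a b > 0" using a b by (simp add: Beta_def)
  have F1': "((\<lambda>t. t powr (a + 1 - 1) * (1 - t) powr (b - 1)) has_integral Beta (a+1) b) {0..1}"
    using has_integral_Beta_real[of "a+1" b] a b by simp
  have F1: "((\<lambda>t. t * f t) has_integral Beta (a+1) b) {0..1}"
  proof (rule has_integral_eq[OF _ F1'])
    fix t :: real assume "t \<in> {0..1}"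
    then show "t powr (a + 1 - 1) * (1 - t) powr (b - 1) = t * f t"
      unfolding f_def by (cases "t = 0") (auto simp: powr_add[symmetric] powr_diff)
  qed
  have F2': "((\<lambda>t. t powr (a + 2 - 1) * (1 - t) powr (b - 1)) has_integral Beta (a+2) b) {0..1}"
    using has_integral_Beta_real[of "a+2" b] a b by simp
  have F2: "((\<lambda>t. t^2 * f t) has_integral Beta (a+2) b) {0..1}"
  proof (rule has_integral_eq[OF _ F2'])
    fix t :: real assume "t \<in> {0..1}"
    then show "t powr (a + 2 - 1) * (1 - t) powr (b - 1) = t^2 * f t"
    proof (cases "t = 0")
      case False
      with \<open>t \<in> {0..1}\<close> have tp: "t > 0" by auto
      have "t powr (a + 2 - 1) = t powr (a - 1) * t powr 2" by (simp add: powr_add[symmetric])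
      then show ?thesis unfolding f_def using tp by (simp add: powr_numeral)
    qed (simp add: f_def)
  qed
  have na: "a \<notin> \<int>\<^sub>\<le>\<^sub>0" "a + 1 \<notin> \<int>\<^sub>\<le>\<^sub>0" using a
    by (auto elim!: nonpos_Ints_cases)
  have B1: "Beta (a+1) b = m * Beta a b"
    using Beta_plus1_left[OF na(1), of b] a b unfolding m_def by (simp add: field_simps)
  have B2: "Beta (a+2) b = (a+1)/(a+b+1) * Beta (a+1) b"
    using Beta_plus1_left[OF na(2), of b] a b by (simp add: field_simps add_ac)
  have G: "((\<lambda>t. t^2 * f t - 2*m * (t * f t) + m^2 * f t) has_integral
      Beta (a+2) b - 2*m*Beta (a+1) b + m^2 * Beta a b) {0..1}"
    by (intro has_integral_add has_integral_diff has_integral_mult_right F0 F1 F2)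
  have val: "Beta (a+2) b - 2*m*Beta (a+1) b + m^2 * Beta a b = Beta a b * V"
    unfolding B2 B1 V_def by (simp add: power2_eq_square algebra_simps)
  show "((\<lambda>t. f t * (t - m)^2) has_integral Beta a b * V) {0..1}"
  proof (rule has_integral_eq[OF _ G[unfolded val]])
    fix t show "t^2 * f t - 2*m * (t * f t) + m^2 * f t = f t * (t - m)^2"
      by (simp add: power2_eq_square algebra_simps)
  qed
  have ab: "a + b > 0" using a b by simp
  have "V = (a * b) / ((a+b)^2 * (a+b+1))" unfolding V_def m_def using ab
    by (simp add: field_simps power2_eq_square)
  also have "\<dots> \<le> ((a+b)^2) / ((a+b)^2 * (a+b+1))"
    using a b ab by (intro divide_right_mono) (auto simp: power2_eq_square algebra_simps)
  also have "\<dots> = 1 / (a+b+1)" using ab by simp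
  finally show "V \<le> 1 / (a + b + 1)" .
qed

lemma tail_bounds:
  fixes a b x :: real
  assumes a: "a > 0" and b: "b > 0" and x: "0 \<le> x" "x \<le> 1"
  defines "m \<equiv> a / (a + b)"
  defines "V \<equiv> m * ((a + 1) / (a + b + 1) - m)"
  shows "inc_beta 1 a b = Beta a b"
    and "x < m \<Longrightarrow> inc_beta x a b \<le> Beta a b * V / (m - x)^2"
    and "m < x \<Longrightarrow> Beta a b * (1 - V / (x - m)^2) \<le> inc_beta x a b"
proof -
  define f where "f \<equiv> \<lambda>t::real. t powr (a - 1) * (1 - t) powr (b - 1)"
  note M = beta_moments[OF a b, folded f_def m_def V_def]
  have fnn: "\<And>t. f t \<ge> 0" unfolding f_def by simp
  show "inc_beta 1 a b = Beta a b" unfolding inc_beta_def using M(1)[folded f_def]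
    by (simp add: f_def integral_unique)
  have "f integrable_on {0..x}"
    using integrable_subinterval_real[OF has_integral_integrable[OF M(1)]] x by auto
  then have "(f has_integral inc_beta x a b) {0..x}"
    unfolding inc_beta_def f_def by (simp add: f_def has_integral_integral)
  then have H: "((\<lambda>t. if t \<in> {0..x} then f t else 0) has_integral inc_beta x a b) {0..1}"
    using x by (subst has_integral_restrict) auto
  show "inc_beta x a b \<le> Beta a b * V / (m - x)^2" if xm: "x < m"
  proof -
    have G: "((\<lambda>t. f t * (t - m)^2 / (m - x)^2) has_integral Beta a b * V / (m - x)^2) {0..1}"
      using has_integral_divide[OF M(2)] by (simp add: f_def V_def)
    show ?thesis
    proof (rule has_integral_le[OF H G])
      fix t :: real assume "t \<in> {0..1}"
      show "(if t \<in> {0..x} then f t else 0) \<le> f t * (t - m)^2 / (m - x)^2"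
      proof (cases "t \<le> x")
        case True
        have "(m - x)^2 \<le> (m - t)^2" using True xm by (intro power_mono) auto
        then have "(m - x)^2 \<le> (t - m)^2" by (simp add: power2_commute)
        then have "1 \<le> (t - m)^2 / (m - x)^2" using xm by simp
        then have "f t * 1 \<le> f t * ((t - m)^2 / (m - x)^2)"
          using fnn[of t] by (intro mult_left_mono) auto
        then show ?thesis using True \<open>t \<in> {0..1}\<close> by simp
      qed (use fnn in simp)
    qed
  qed
  show "Beta a b * (1 - V / (x - m)^2) \<le> inc_beta x a b" if xm: "m < x"
  proof -
    have G: "((\<lambda>t. f t - f t * (t - m)^2 / (x - m)^2) has_integral Beta a b - Beta a b * V / (x - m)^2) {0..1}"
      using has_integral_diff[OF M(1) has_integral_divide[OF M(2)]] by (simp add: f_def V_def)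
    have "Beta a b - Beta a b * V / (x - m)^2 \<le> inc_beta x a b"
    proof (rule has_integral_le[OF G H])
      fix t :: real assume t01: "t \<in> {0..1}"
      have e: "f t - f t * (t - m)^2 / (x - m)^2 = f t * (1 - (t - m)^2 / (x - m)^2)" by (simp add: algebra_simps)
      show "f t - f t * (t - m)^2 / (x - m)^2 \<le> (if t \<in> {0..x} then f t else 0)"
      proof (cases "t \<le> x")
        case True
        have "0 \<le> (t - m)^2 / (x - m)^2" by simp
        then show ?thesis using True t01 fnn[of t] by (simp add: mult_le_cancel_left1)
      next
        case False
        have "(x - m)^2 \<le> (t - m)^2" using False xm by (intro power_mono) auto
        then have "1 \<le> (t - m)^2 / (x - m)^2" using xm by simp
        then have "f t * (1 - (t - m)^2 / (x - m)^2) \<le> 0"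
          using fnn[of t] by (intro mult_nonneg_nonpos) auto
        then show ?thesis using False e by simp
      qed
    qed
    then show ?thesis by (simp add: algebra_simps)
  qed
qed

theorem theorem1:
  fixes p r :: real and n :: "nat \<Rightarrow> real"
  assumes "0 < p" "p < 1" "0 < r" "r < 1"
    and "\<And>k. k \<ge> 1 \<Longrightarrow> n k > 0"
    and "\<And>k. k \<ge> 1 \<Longrightarrow> reg_inc_beta (1 - p) (n k) (real k + 1) = r"
  shows "(\<lambda>k. n k / real k) \<longlonglongrightarrow> 1 / p - 1"
proof -
  define x where "x = 1 - p"
  have x01: "0 < x" "x < 1" using assms(1,2) by (auto simp: x_def)
  define m where "m k = n k / (n k + (real k + 1))" for k
  have bnd: "(m k < x \<longrightarrow> 1 - (1 / (real k + 2)) / (x - m k)^2 \<le> r) \<and>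
             (x < m k \<longrightarrow> r \<le> (1 / (real k + 2)) / (m k - x)^2)" if k: "k \<ge> 1" for k
  proof -
    define a where "a = n k"
    define b where "b = real k + 1"
    have a: "a > 0" using assms(5)[OF k] by (simp add: a_def)
    have b: "b > 0" by (simp add: b_def)
    define V where "V = a / (a + b) * ((a + 1) / (a + b + 1) - a / (a + b))"
    note TB = tail_bounds[OF a b, of x, folded V_def]
    note BM = beta_moments[OF a b, folded V_def]
    have mk: "m k = a / (a + b)" by (simp add: m_def a_def b_def)
    have Bp: "Beta a b > 0" using BM(4) .
    have inc: "inc_beta x a b = r * Beta a b"
      using assms(6)[OF k] TB(1) Bp x01 unfolding reg_inc_beta_def x_def a_def b_def
      by (auto simp: field_simps)
    have Vle: "V \<le> 1 / (real k + 2)"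
    proof -
      have "V \<le> 1 / (a + b + 1)" using BM(3) .
      also have "\<dots> \<le> 1 / (real k + 2)" using a by (intro divide_left_mono) (auto simp: b_def)
      finally show ?thesis .
    qed
    show ?thesis
    proof (intro conjI impI)
      assume lt: "m k < x"
      have "Beta a b * (1 - V / (x - m k)^2) \<le> r * Beta a b"
        using TB(3) lt x01 inc by (simp add: mk)
      then have "1 - V / (x - m k)^2 \<le> r" using Bp by (simp add: mult.commute)
      moreover have "V / (x - m k)^2 \<le> (1 / (real k + 2)) / (x - m k)^2"
        using Vle by (intro divide_right_mono) auto
      ultimately show "1 - (1 / (real k + 2)) / (x - m k)^2 \<le> r" by linarith
    next
      assume lt: "x < m k"
      have "r * Beta a b \<le> Beta a b * V / (m k - x)^2"
        using TB(2) lt x01 inc by (simp add: mk)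
      then have "r * Beta a b \<le> (V / (m k - x)^2) * Beta a b" by (simp add: mult.commute)
      then have "r \<le> V / (m k - x)^2" using Bp by (rule mult_right_le_imp_le)
      moreover have "V / (m k - x)^2 \<le> (1 / (real k + 2)) / (m k - x)^2"
        using Vle by (intro divide_right_mono) auto
      ultimately show "r \<le> (1 / (real k + 2)) / (m k - x)^2" by linarith
    qed
  qed
  have mlim: "m \<longlonglongrightarrow> x"
  proof (rule LIMSEQ_I)
    fix e :: real assume e: "0 < e"
    define c where "c = min r (1 - r)"
    have c: "c > 0" "c \<le> r" "c \<le> 1 - r" using assms(3,4) by (auto simp: c_def)
    obtain N :: nat where N: "1 / (c * e^2) < real N" using reals_Archimedean2 by blast
    show "\<exists>no. \<forall>k\<ge>no. norm (m k - x) < e"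
    proof (intro exI allI impI)
      fix k assume kN: "k \<ge> max N 1"
      then have k1: "k \<ge> 1" by simp
      have ce: "c * e^2 > 0" using c e by simp
      have "1 / (c * e^2) < real k + 2" using N kN by linarith
      then have small: "1 / (real k + 2) < c * e^2" using ce
        by (simp add: field_simps)
      have "(1 / (real k + 2)) / e^2 < (c * e^2) / e^2"
        using small e by (intro divide_strict_right_mono) auto
      then have small2: "(1 / (real k + 2)) / e^2 < c" using e by simp
      show "norm (m k - x) < e"
      proof (rule ccontr)
        assume "\<not> norm (m k - x) < e"
        then have "e \<le> \<bar>m k - x\<bar>" by simp
        then consider "x + e \<le> m k" | "m k \<le> x - e" by linarith
        then show False
        proof cases
          case 1
          then have lt: "x < m k" using e by linarith
          have "e^2 \<le> (m k - x)^2" using 1 e by (intro power_mono) auto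
          then have "(1 / (real k + 2)) / (m k - x)^2 \<le> (1 / (real k + 2)) / e^2"
            using e lt by (intro divide_left_mono) auto
          also have "\<dots> < c" using small2 .
          finally show False using bnd[OF k1] lt c by linarith
        next
          case 2
          then have lt: "m k < x" using e by linarith
          have "e^2 \<le> (x - m k)^2" using 2 e by (intro power_mono) auto
          then have "(1 / (real k + 2)) / (x - m k)^2 \<le> (1 / (real k + 2)) / e^2"
            using e lt by (intro divide_left_mono) auto
          also have "\<dots> < c" using small2 .
          finally show False using bnd[OF k1] lt c by linarith
        qed
      qed
    qed
  qed
  have L: "(\<lambda>k. m k / (1 - m k) * (real (Suc k) / real k)) \<longlonglongrightarrow> x / (1 - x) * 1"
    using x01 by (intro tendsto_mult tendsto_divide mlim tendsto_diff tendsto_const LIMSEQ_Suc_n_over_n) auto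
  have eq: "\<forall>\<^sub>F k in sequentially. m k / (1 - m k) * (real (Suc k) / real k) = n k / real k"
  proof (rule eventually_sequentiallyI[of 1])
    fix k :: nat assume k: "k \<ge> 1"
    have a: "n k > 0" using assms(5)[OF k] .
    have d: "n k + (real k + 1) > 0" using a by simp
    have "1 - m k = (real k + 1) / (n k + (real k + 1))" using d by (simp add: m_def field_simps)
    then have "m k / (1 - m k) = n k / (real k + 1)" using d by (simp add: m_def)
    then show "m k / (1 - m k) * (real (Suc k) / real k) = n k / real k"
      using k by (simp add: add.commute)
  qed
  have "x / (1 - x) * 1 = 1 / p - 1" using assms(1) by (simp add: x_def field_simps)
  then show ?thesis using Lim_transform_eventually[OF L eq] by simp
qed
end
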